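(* A set of representatives for the double cosets $\mathcal{B}\backslash\mathcal{K}/\mathcal{B}$ is $$\left\{\begin{pmatrix}1&0\\0&1\end{pmatrix},\ \begin{pmatrix}0&1\\1&0\end{pmatrix},\ \begin{pmatrix}1&0\\ \sqrt\epsilon\,\varpi^k&1\end{pmatrix}\ \middle|\ k\ge1\right\}.$$
   Context: Let $F$ be a non-archimedean local field with odd residual characteristic, ring of integers $\mathcal{O}_F$, uniformizer $\varpi$. Fix a non-square $\epsilon\in\mathcal{O}_F^\times$, $E=F[\sqrt\epsilon]$ with ring of integers $\mathcal{O}_E$; $\overline{x}$ is Galois conjugation. $G=\{g\in\mathrm{GL}_2(E):\overline{g}^{\top}\mathrm{w}g=\mathrm{w}\}$ with $\mathrm{w}=\begin{pmatrix}0&1\\1&0\end{pmatrix}$, $\mathcal{K}=G\cap M_2(\mathcal{O}_E)$, $B$ the subgroup of upper triangular matrices in $G$, and $\mathcal{B}=B\cap\mathcal{K}$. *)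

theory Defs
  imports Main
begin

text \<open>A valuation v on a field; its value at 0 is irrelevant (0 has valuation +infinity).\<close>
definition disc_val :: "('a::field \<Rightarrow> int) \<Rightarrow> bool" where
  "disc_val v \<longleftrightarrow>
     (\<forall>x y. x \<noteq> 0 \<longrightarrow> y \<noteq> 0 \<longrightarrow> v (x * y) = v x + v y) \<and>
     (\<forall>x y. x \<noteq> 0 \<longrightarrow> y \<noteq> 0 \<longrightarrow> x + y \<noteq> 0 \<longrightarrow> min (v x) (v y) \<le> v (x + y)) \<and>
     (\<forall>n. \<exists>x. x \<noteq> 0 \<and> v x = n)"

definition OF :: "('a::field \<Rightarrow> int) \<Rightarrow> 'a set" where
  "OF v = {x. x = 0 \<or> 0 \<le> v x}"

definition maxid :: "('a::field \<Rightarrow> int) \<Rightarrow> 'a set" where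
  "maxid v = {x. x = 0 \<or> 0 < v x}"

definition units_OF :: "('a::field \<Rightarrow> int) \<Rightarrow> 'a set" where
  "units_OF v = {x. x \<noteq> 0 \<and> v x = 0}"

definition finite_residue_field :: "('a::field \<Rightarrow> int) \<Rightarrow> bool" where
  "finite_residue_field v \<longleftrightarrow>
     (\<exists>S. finite S \<and> S \<subseteq> OF v \<and> (\<forall>x\<in>OF v. \<exists>s\<in>S. x - s \<in> maxid v))"

definition vclose :: "('a::field \<Rightarrow> int) \<Rightarrow> int \<Rightarrow> 'a \<Rightarrow> 'a \<Rightarrow> bool" where
  "vclose v n x y \<longleftrightarrow> x = y \<or> n \<le> v (x - y)"

definition vcomplete :: "('a::field \<Rightarrow> int) \<Rightarrow> bool" where
  "vcomplete v \<longleftrightarrow>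
     (\<forall>X :: nat \<Rightarrow> 'a.
        (\<forall>n. \<exists>N. \<forall>i\<ge>N. \<forall>j\<ge>N. vclose v n (X i) (X j)) \<longrightarrow>
        (\<exists>L. \<forall>n. \<exists>N. \<forall>i\<ge>N. vclose v n (X i) L))"

definition nonarch_local_field :: "('a::field \<Rightarrow> int) \<Rightarrow> bool" where
  "nonarch_local_field v \<longleftrightarrow> disc_val v \<and> finite_residue_field v \<and> vcomplete v"

text \<open>Residue field O_F / m has odd characteristic iff 2 is not in the maximal ideal.\<close>
definition odd_residual_char :: "('a::field \<Rightarrow> int) \<Rightarrow> bool" where
  "odd_residual_char v \<longleftrightarrow> (2::'a) \<notin> maxid v"

section \<open>The quadratic extension E = F[sqrt eps]; (a,b) stands for a + b sqrt eps\<close>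

type_synonym 'a ext = "'a \<times> 'a"

definition ezero :: "'a::field ext" where "ezero = (0, 0)"
definition eone :: "'a::field ext" where "eone = (1, 0)"

fun eadd :: "'a::field ext \<Rightarrow> 'a ext \<Rightarrow> 'a ext" where
  "eadd (a, b) (c, d) = (a + c, b + d)"

fun eneg :: "'a::field ext \<Rightarrow> 'a ext" where
  "eneg (a, b) = (- a, - b)"

fun emul :: "'a::field \<Rightarrow> 'a ext \<Rightarrow> 'a ext \<Rightarrow> 'a ext" where
  "emul eps (a, b) (c, d) = (a * c + eps * b * d, a * d + b * c)"

fun econj :: "'a::field ext \<Rightarrow> 'a ext" where
  "econj (a, b) = (a, - b)"

fun enorm :: "'a::field \<Rightarrow> 'a ext \<Rightarrow> 'a" where
  "enorm eps (a, b) = a * a - eps * b * b"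

text \<open>Ring of integers of E: elements of absolute value at most 1, where the
  absolute value of E is the unique extension |z|_E = |N_{E/F} z|^(1/2).\<close>
definition OE :: "('a::field \<Rightarrow> int) \<Rightarrow> 'a \<Rightarrow> 'a ext set" where
  "OE v eps = {z. enorm eps z \<in> OF v}"

section \<open>2x2 matrices over E: M2 a b c d = [[a,b],[c,d]]\<close>

datatype 'e M2 = M2 'e 'e 'e 'e

fun mmul :: "'a::field \<Rightarrow> 'a ext M2 \<Rightarrow> 'a ext M2 \<Rightarrow> 'a ext M2" where
  "mmul eps (M2 a b c d) (M2 a' b' c' d') =
     M2 (eadd (emul eps a a') (emul eps b c')) (eadd (emul eps a b') (emul eps b d'))
        (eadd (emul eps c a') (emul eps d c')) (eadd (emul eps c b') (emul eps d d'))"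

fun mconjT :: "'a::field ext M2 \<Rightarrow> 'a ext M2" where
  "mconjT (M2 a b c d) = M2 (econj a) (econj c) (econj b) (econj d)"

definition mone :: "'a::field ext M2" where "mone = M2 eone ezero ezero eone"
definition wmat :: "'a::field ext M2" where "wmat = M2 ezero eone eone ezero"

fun entries :: "'e M2 \<Rightarrow> 'e set" where
  "entries (M2 a b c d) = {a, b, c, d}"

fun lower_left :: "'e M2 \<Rightarrow> 'e" where
  "lower_left (M2 a b c d) = c"

definition GL2 :: "'a::field \<Rightarrow> 'a ext M2 set" where
  "GL2 eps = {g. \<exists>h. mmul eps g h = mone \<and> mmul eps h g = mone}"

definition Ugrp :: "'a::field \<Rightarrow> 'a ext M2 set" where
  "Ugrp eps = {g \<in> GL2 eps. mmul eps (mconjT g) (mmul eps wmat g) = wmat}"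

definition Kgrp :: "('a::field \<Rightarrow> int) \<Rightarrow> 'a \<Rightarrow> 'a ext M2 set" where
  "Kgrp v eps = {g \<in> Ugrp eps. entries g \<subseteq> OE v eps}"

definition Bgrp :: "('a::field \<Rightarrow> int) \<Rightarrow> 'a \<Rightarrow> 'a ext M2 set" where
  "Bgrp v eps = {g \<in> Kgrp v eps. lower_left g = ezero}"

definition dcoset :: "('a::field \<Rightarrow> int) \<Rightarrow> 'a \<Rightarrow> 'a ext M2 \<Rightarrow> 'a ext M2 set" where
  "dcoset v eps g = {mmul eps b1 (mmul eps g b2) | b1 b2. b1 \<in> Bgrp v eps \<and> b2 \<in> Bgrp v eps}"

text \<open>The proposed representatives; (0, pi^k) is sqrt(eps) * pi^k\<close>
definition reps :: "'a::field \<Rightarrow> 'a ext M2 set" where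
  "reps pi = {mone, wmat} \<union> {M2 eone ezero (0, pi ^ k) eone | k::nat. 1 \<le> k}"

end

theory Submission
  imports Defs
begin


locale LF =
  fixes v :: "'a::field \<Rightarrow> int" and eps pi :: 'a
  assumes nlf: "nonarch_local_field v"
    and oddc: "odd_residual_char v"
    and epsu: "eps \<in> units_OF v"
    and nsq: "\<not> (\<exists>x. x * x = eps)"
    and pi0: "pi \<noteq> 0" and vpi: "v pi = 1"
begin

definition ge :: "int \<Rightarrow> 'a \<Rightarrow> bool" where
  "ge n x \<longleftrightarrow> x = 0 \<or> n \<le> v x"

lemma dv: "disc_val v" using nlf unfolding nonarch_local_field_def by auto

lemma vmult: "x \<noteq> 0 \<Longrightarrow> y \<noteq> 0 \<Longrightarrow> v (x * y) = v x + v y"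
  using dv unfolding disc_val_def by blast

lemma vultra: "x \<noteq> 0 \<Longrightarrow> y \<noteq> 0 \<Longrightarrow> x + y \<noteq> 0 \<Longrightarrow> min (v x) (v y) \<le> v (x + y)"
  using dv unfolding disc_val_def by blast

lemma v1: "v 1 = 0"
  using vmult[of 1 1] by simp

lemma vm1: "v (-1) = 0"
  using vmult[of "-1" "-1"] v1 by simp

lemma vneg: "v (- x) = v x"
proof (cases "x = 0")
  case False
  then show ?thesis using vmult[of "-1" x] vm1 by simp
qed simp

lemma vinv: "x \<noteq> 0 \<Longrightarrow> v (inverse x) = - v x"
  using vmult[of x "inverse x"] v1 by simp

lemma vdiv: "x \<noteq> 0 \<Longrightarrow> y \<noteq> 0 \<Longrightarrow> v (x / y) = v x - v y"
  by (simp add: divide_inverse vmult vinv)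

lemma vpow: "x \<noteq> 0 \<Longrightarrow> v (x ^ n) = int n * v x"
  by (induction n) (auto simp: v1 vmult algebra_simps)

lemma ge_zero[simp]: "ge n 0" by (simp add: ge_def)

lemma ge_mono: "m \<le> n \<Longrightarrow> ge n x \<Longrightarrow> ge m x"
  unfolding ge_def by auto

lemma ge_neg: "ge n (- x) = ge n x"
  unfolding ge_def by (simp add: vneg)

lemma ge_add: "ge n x \<Longrightarrow> ge n y \<Longrightarrow> ge n (x + y)"
  unfolding ge_def using vultra[of x y] by (cases "x = 0"; cases "y = 0"; cases "x + y = 0") auto

lemma ge_diff: "ge n x \<Longrightarrow> ge n y \<Longrightarrow> ge n (x - y)"
  using ge_add[of n x "- y"] ge_neg by simp

lemma ge_mult: "ge n x \<Longrightarrow> ge m y \<Longrightarrow> ge (n + m) (x * y)"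
  unfolding ge_def by (cases "x = 0"; cases "y = 0") (auto simp: vmult)

lemma ge_one[simp]: "ge 0 1" by (simp add: ge_def v1)

lemma OF_ge: "x \<in> OF v \<longleftrightarrow> ge 0 x" by (auto simp: OF_def ge_def)
lemma maxid_ge: "x \<in> maxid v \<longleftrightarrow> ge 1 x" by (auto simp: maxid_def ge_def)

lemma unit_add: "x \<noteq> 0 \<Longrightarrow> v x = 0 \<Longrightarrow> ge 1 y \<Longrightarrow> x + y \<noteq> 0 \<and> v (x + y) = 0"
proof -
  assume a: "x \<noteq> 0" "v x = 0" "ge 1 y"
  have g0: "ge 0 (x + y)" using a by (intro ge_add) (auto simp: ge_def)
  show ?thesis
  proof (cases "x + y = 0")
    case True
    then have "y = - x" by (simp add: eq_neg_iff_add_eq_0 add.commute)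
    then show ?thesis using a by (simp add: ge_def vneg)
  next
    case False
    have "ge 1 (x + y) \<Longrightarrow> False"
    proof -
      assume "ge 1 (x + y)"
      then have "ge 1 ((x + y) - y)" using a by (intro ge_diff)
      then show False using a by (simp add: ge_def)
    qed
    then show ?thesis using False g0 unfolding ge_def by force
  qed
qed

lemma two: "(2::'a) \<noteq> 0 \<and> v 2 = 0"
proof -
  have "(2::'a) \<notin> maxid v" using oddc by (simp add: odd_residual_char_def)
  then have n: "\<not> ge 1 (2::'a)" by (simp add: maxid_ge)
  have "ge 0 (1 + (1::'a))" by (intro ge_add) auto
  then have "ge 0 (2::'a)" by (simp add: one_add_one)
  with n show ?thesis by (auto simp: ge_def)
qed

lemma eps_unit: "eps \<noteq> 0" "v eps = 0" using epsu by (auto simp: units_OF_def)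

lemma ge_unit_mult: "u \<noteq> 0 \<Longrightarrow> v u = 0 \<Longrightarrow> ge n (u * x) = ge n x"
  unfolding ge_def by (cases "x = 0") (auto simp: vmult)

lemma vclose_ge: "vclose v n x y \<longleftrightarrow> ge n (x - y)"
  unfolding vclose_def ge_def by auto

lemma sq_ge1: "ge 1 (x * x) \<Longrightarrow> ge 1 x"
  unfolding ge_def by (cases "x = 0") (auto simp: vmult)

lemma prime_m: "ge 0 x \<Longrightarrow> ge 0 y \<Longrightarrow> ge 1 (x * y) \<Longrightarrow> ge 1 x \<or> ge 1 y"
  unfolding ge_def by (cases "x = 0"; cases "y = 0") (auto simp: vmult)

end


context LF begin

lemma vcomp: "vcomplete v" using nlf unfolding nonarch_local_field_def by auto

lemma hensel:
  assumes w0: "w \<noteq> 0" and vw: "v w = 0" and x0: "ge 1 (x0 * x0 - w)"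
  shows "\<exists>x. x * x = w"
proof -
  have x00: "x0 \<noteq> 0"
  proof
    assume "x0 = 0"
    then have "ge 1 (- w)" using x0 by simp
    then have "ge 1 w" by (simp add: ge_neg)
    then show False using w0 vw by (simp add: ge_def)
  qed
  have "x0 * x0 = w + (x0 * x0 - w)" by simp
  then have "v (x0 * x0) = 0" using unit_add[OF w0 vw x0] by simp
  then have vx0: "v x0 = 0" using vmult[OF x00 x00] by simp
  define X where "X = rec_nat x0 (\<lambda>_ x. x - (x * x - w) / (2 * x))"
  have X0: "X 0 = x0" by (simp add: X_def)
  have XS: "X (Suc n) = X n - (X n * X n - w) / (2 * X n)" for n by (simp add: X_def)
  have step: "X (Suc n) \<noteq> 0 \<and> v (X (Suc n)) = 0 \<and> ge (int (Suc n) + 1) (X (Suc n) * X (Suc n) - w)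
     \<and> ge (int n + 1) (X (Suc n) - X n)"
    if h: "X n \<noteq> 0" "v (X n) = 0" "ge (int n + 1) (X n * X n - w)" for n
  proof -
    define x where "x = X n"
    define e where "e = x * x - w"
    have xn: "x \<noteq> 0" "v x = 0" "ge (int n + 1) e" using h by (auto simp: x_def e_def)
    have ged: "ge (int n + 1) (e / (2 * x))"
    proof (cases "e = 0")
      case False
      then have "v (e / (2 * x)) = v e" using two xn by (simp add: vdiv vmult)
      then show ?thesis using xn False by (simp add: ge_def)
    qed simp
    have XSx: "X (Suc n) = x + (- (e / (2 * x)))" by (simp add: XS x_def e_def)
    have g1: "ge 1 (- (e / (2 * x)))" using ged by (simp add: ge_neg) (rule ge_mono[rotated], auto)
    have u: "X (Suc n) \<noteq> 0 \<and> v (X (Suc n)) = 0" using unit_add[OF xn(1,2) g1] XSx by simp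
    define t where "t = e / (2 * x)"
    have et: "x * x - w = 2 * x * t" using xn two by (simp add: t_def e_def field_simps)
    have "(x + - t) * (x + - t) - w = (x * x - w) - 2 * x * t + t * t" by (simp add: algebra_simps)
    then have "X (Suc n) * X (Suc n) - w = (e / (2 * x)) * (e / (2 * x))"
      unfolding XSx using et by (simp add: t_def)
    moreover have "ge ((int n + 1) + (int n + 1)) ((e / (2 * x)) * (e / (2 * x)))"
      using ged by (intro ge_mult)
    ultimately have "ge (int (Suc n) + 1) (X (Suc n) * X (Suc n) - w)"
      by (auto intro: ge_mono[rotated])
    moreover have "X (Suc n) - X n = - (e / (2 * x))" using XSx x_def by simp
    ultimately show ?thesis using u ged by (simp add: ge_neg)
  qed
  have inv: "X n \<noteq> 0 \<and> v (X n) = 0 \<and> ge (int n + 1) (X n * X n - w)" for n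
  proof (induction n)
    case 0
    then show ?case using X0 x00 vx0 x0 by simp
  next
    case (Suc n)
    then show ?case using step[of n] by blast
  qed
  have dif: "ge (int n + 1) (X (Suc n) - X n)" for n using step[of n] inv[of n] by blast
  have cl: "ge (int i + 1) (X j - X i)" if "i \<le> j" for i j
    using that
  proof (induction j)
    case 0
    then show ?case by simp
  next
    case (Suc j)
    show ?case
    proof (cases "i = Suc j")
      case False
      then have ij: "i \<le> j" using Suc by simp
      have "X (Suc j) - X i = (X (Suc j) - X j) + (X j - X i)" by simp
      moreover have "ge (int i + 1) (X (Suc j) - X j)"
        using dif[of j] ij by (auto intro: ge_mono[rotated])
      ultimately show ?thesis using Suc ij ge_add by metis
    qed simp
  qed
  have cauchy: "\<forall>n. \<exists>N. \<forall>i\<ge>N. \<forall>j\<ge>N. vclose v n (X i) (X j)"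
  proof
    fix n
    show "\<exists>N. \<forall>i\<ge>N. \<forall>j\<ge>N. vclose v n (X i) (X j)"
    proof (intro exI allI impI)
      fix i j assume ij: "nat n \<le> i" "nat n \<le> j"
      have a: "ge (int (nat n) + 1) (X i - X (nat n))" "ge (int (nat n) + 1) (X j - X (nat n))"
        using cl[OF ij(1)] cl[OF ij(2)] by blast+
      have "X i - X j = (X i - X (nat n)) - (X j - X (nat n))" by simp
      then have "ge (int (nat n) + 1) (X i - X j)" using a ge_diff by metis
      then show "vclose v n (X i) (X j)" by (simp add: vclose_ge) (rule ge_mono[rotated], auto)
    qed
  qed
  then obtain L where L: "\<forall>n. \<exists>N. \<forall>i\<ge>N. vclose v n (X i) L"
    using vcomp unfolding vcomplete_def by blast
  show ?thesis
  proof (rule ccontr)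
    assume nex: "\<not> (\<exists>x. x * x = w)"
    define d where "d = L * L - w"
    have d0: "d \<noteq> 0" using nex d_def by auto
    define n where "n = max 1 (v d + 1)"
    obtain N where N: "\<forall>i\<ge>N. vclose v n (X i) L" using L by blast
    define i where "i = max N (nat n)"
    have "ge n (X i - L)" using N i_def by (simp add: vclose_ge)
    then have a1: "ge n (L - X i)" using ge_neg[of n "X i - L"] by simp
    have xi: "X i \<noteq> 0" "v (X i) = 0" "ge (int i + 1) (X i * X i - w)" using inv[of i] by auto
    have "ge 0 (L - X i)" using a1 n_def by (auto intro: ge_mono[rotated])
    moreover have "ge 0 (2 * X i)" using two xi by (simp add: ge_def vmult)
    ultimately have "ge 0 ((L - X i) + 2 * X i)" by (rule ge_add)
    then have a2: "ge 0 (L + X i)" by (simp add: algebra_simps)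
    have "ge (n + 0) ((L - X i) * (L + X i))" using a1 a2 by (rule ge_mult)
    moreover have "ge n (X i * X i - w)" using xi(3) i_def n_def by (auto intro: ge_mono[rotated])
    ultimately have "ge n ((L - X i) * (L + X i) + (X i * X i - w))" by (simp add: ge_add)
    moreover have "(L - X i) * (L + X i) + (X i * X i - w) = d" by (simp add: d_def algebra_simps)
    ultimately have "ge n d" by simp
    then show False using d0 n_def by (simp add: ge_def)
  qed
qed

end



lemma card_fib:
  assumes fin: "finite T" and t0: "t0 \<in> T"
    and z: "\<And>x. x \<in> T \<Longrightarrow> h x = h t0 \<Longrightarrow> x = t0"
    and two: "\<And>x y. x \<in> T \<Longrightarrow> y \<in> T \<Longrightarrow> h x = h y \<Longrightarrow> y = x \<or> y = \<sigma> x"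
  shows "card T + 1 \<le> 2 * card (h ` T)"
proof -
  define T' where "T' = T - {t0}"
  have finT': "finite T'" using fin T'_def by simp
  have T: "T = insert t0 T'" "t0 \<notin> T'" using t0 T'_def by auto
  have nh: "h t0 \<notin> h ` T'" using z T'_def by auto
  have cT: "card T = card T' + 1" using T finT' by simp
  have ch: "card (h ` T) = card (h ` T') + 1" using T finT' nh by simp
  define g where "g = inv_into T' h"
  have sub: "T' \<subseteq> g ` (h ` T') \<union> \<sigma> ` (g ` (h ` T'))"
  proof
    fix y assume y: "y \<in> T'"
    define x where "x = g (h y)"
    have x: "x \<in> T'" "h x = h y" using y unfolding x_def g_def by (auto intro: inv_into_into f_inv_into_f)
    have "y = x \<or> y = \<sigma> x" using two[of x y] x y T'_def by auto
    moreover have "x \<in> g ` (h ` T')" using y x_def by auto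
    ultimately show "y \<in> g ` (h ` T') \<union> \<sigma> ` (g ` (h ` T'))" by auto
  qed
  have "card T' \<le> card (g ` (h ` T') \<union> \<sigma> ` (g ` (h ` T')))"
    using sub finT' by (intro card_mono) auto
  also have "\<dots> \<le> card (g ` (h ` T')) + card (\<sigma> ` (g ` (h ` T')))" by (rule card_Un_le)
  also have "\<dots> \<le> card (h ` T') + card (h ` T')"
    using card_image_le[of "h ` T'" g] card_image_le[of "g ` h ` T'" \<sigma>] finT' by simp
  finally show ?thesis using cT ch by simp
qed

context LF begin

lemma ge0_mult: "ge 0 x \<Longrightarrow> ge 0 y \<Longrightarrow> ge 0 (x * y)"
  using ge_mult[of 0 x 0 y] by simp

lemma ge0_eps: "ge 0 eps" using eps_unit by (simp add: ge_def)

lemma norm_ge0: "ge 0 p \<Longrightarrow> ge 0 q \<Longrightarrow> ge 0 (p * p - eps * q * q)"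
  by (intro ge_diff ge0_mult ge0_eps)

lemma aniso:
  assumes p: "ge 0 p" and q: "ge 0 q" and n: "ge 1 (p * p - eps * q * q)"
  shows "ge 1 p \<and> ge 1 q"
proof (cases "ge 1 q")
  case True
  have "ge (0 + (1 + 1)) (eps * (q * q))" using eps_unit True
    by (intro ge_mult ge_mult) (auto simp: ge_def)
  then have "ge 1 (eps * q * q)" by (auto simp: mult.assoc intro: ge_mono[rotated])
  then have "ge 1 ((p * p - eps * q * q) + eps * q * q)" using n by (intro ge_add)
  then have "ge 1 p" by (auto intro: sq_ge1)
  then show ?thesis using True by simp
next
  case False
  then have q0: "q \<noteq> 0" "v q = 0" using q by (auto simp: ge_def)
  have "(p / q) * (p / q) - eps = (p * p - eps * q * q) / (q * q)" using q0 by (simp add: field_simps)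
  moreover have "ge 1 ((p * p - eps * q * q) / (q * q))"
    using n q0 by (cases "p * p - eps * q * q = 0") (auto simp: ge_def vdiv vmult)
  ultimately have "ge 1 ((p / q) * (p / q) - eps)" by simp
  then have "\<exists>x. x * x = eps" using eps_unit hensel[of eps "p / q"] by auto
  then show ?thesis using nsq by blast
qed

lemma norm_scale:
  assumes s: "s \<noteq> 0" and p: "ge 0 (s * p)" and q: "ge 0 (s * q)"
    and nb: "\<not> (ge 1 (s * p) \<and> ge 1 (s * q))"
  shows "p * p - eps * q * q \<noteq> 0 \<and> v (p * p - eps * q * q) = - 2 * v s"
proof -
  define N' where "N' = (s * p) * (s * p) - eps * (s * q) * (s * q)"
  have "\<not> ge 1 N'" using aniso[OF p q] nb N'_def by blast
  moreover have "ge 0 N'" unfolding N'_def using p q by (rule norm_ge0)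
  ultimately have N'0: "N' \<noteq> 0" "v N' = 0" by (auto simp: ge_def)
  have e: "N' = (s * s) * (p * p - eps * q * q)" by (simp add: N'_def algebra_simps)
  then have "p * p - eps * q * q \<noteq> 0" using N'0 by auto
  then show ?thesis using N'0 e s by (simp add: vmult)
qed

lemma norm_zero: "p * p - eps * q * q = 0 \<Longrightarrow> p = 0 \<and> q = 0"
proof -
  assume h: "p * p - eps * q * q = 0"
  show ?thesis
  proof (cases "q = 0")
    case True then show ?thesis using h by simp
  next
    case False
    then have "(p / q) * (p / q) = eps" using h by (simp add: field_simps)
    then show ?thesis using nsq by blast
  qed
qed

lemma OE_iff: "enorm eps z \<in> OF v \<longleftrightarrow> ge 0 (fst z) \<and> ge 0 (snd z)"
proof (cases z)
  case (Pair p q)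
  have "ge 0 (p * p - eps * q * q) \<longleftrightarrow> ge 0 p \<and> ge 0 q"
  proof
    assume pq: "ge 0 p \<and> ge 0 q"
    show "ge 0 (p * p - eps * q * q)" using pq norm_ge0 by blast
  next
    assume N: "ge 0 (p * p - eps * q * q)"
    show "ge 0 p \<and> ge 0 q"
    proof (rule ccontr)
      assume nn: "\<not> (ge 0 p \<and> ge 0 q)"
      have "\<exists>s. s \<noteq> 0 \<and> ge 0 (s * p) \<and> ge 0 (s * q) \<and> \<not> (ge 1 (s * p) \<and> ge 1 (s * q)) \<and> v s > 0"
      proof (cases "p \<noteq> 0 \<and> v p < 0 \<and> (q = 0 \<or> v p \<le> v q)")
        case True
        then show ?thesis
          by (intro exI[of _ "inverse p"]) (cases "q = 0"; auto simp: ge_def vinv vmult v1)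
      next
        case False
        then have "q \<noteq> 0 \<and> v q < 0 \<and> (p = 0 \<or> v q \<le> v p)" using nn by (auto simp: ge_def)
        then show ?thesis
          by (intro exI[of _ "inverse q"]) (cases "p = 0"; auto simp: ge_def vinv vmult v1)
      qed
      then obtain s where s: "s \<noteq> 0" "ge 0 (s * p)" "ge 0 (s * q)" "\<not> (ge 1 (s * p) \<and> ge 1 (s * q))" "v s > 0"
        by blast
      from norm_scale[OF s(1-4)] s(5) N show False by (auto simp: ge_def)
    qed
  qed
  then show ?thesis using Pair by (simp add: OF_ge)
qed

end


context LF begin

lemma residue_norm:
  assumes u0: "u \<noteq> 0" and vu: "v u = 0"
  shows "\<exists>x y. ge 0 x \<and> ge 0 y \<and> ge 1 (x * x - eps * y * y - u)"
proof -
  obtain S where S: "finite S" "S \<subseteq> OF v" "\<forall>x\<in>OF v. \<exists>s\<in>S. x - s \<in> maxid v"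
    using nlf unfolding nonarch_local_field_def finite_residue_field_def by blast
  define P where "P T \<longleftrightarrow> T \<subseteq> S \<and> (\<forall>x. ge 0 x \<longrightarrow> (\<exists>t\<in>T. ge 1 (x - t)))" for T
  have PS: "P S" using S unfolding P_def by (auto simp: OF_ge maxid_ge)
  obtain T where PT: "P T" and minT: "\<And>T'. P T' \<Longrightarrow> card T \<le> card T'"
    using ex_has_least_nat[of P S card] PS by blast
  have finT: "finite T" using PT S(1) unfolding P_def by (auto intro: finite_subset)
  have T0: "ge 0 t" if "t \<in> T" for t using PT S(2) that unfolding P_def by (auto simp: OF_ge)
  have cov: "\<exists>t\<in>T. ge 1 (x - t)" if "ge 0 x" for x using PT that unfolding P_def by auto
  have dist: "t1 = t2" if t: "t1 \<in> T" "t2 \<in> T" "ge 1 (t1 - t2)" for t1 t2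
  proof (rule ccontr)
    assume ne: "t1 \<noteq> t2"
    have "P (T - {t2})"
      unfolding P_def
    proof (intro conjI allI impI)
      show "T - {t2} \<subseteq> S" using PT unfolding P_def by auto
    next
      fix x assume x: "ge 0 x"
      obtain t where tt: "t \<in> T" "ge 1 (x - t)" using cov[OF x] by blast
      show "\<exists>t\<in>T - {t2}. ge 1 (x - t)"
      proof (cases "t = t2")
        case True
        have "x - t1 = (x - t2) + (t2 - t1)" by simp
        moreover have "ge 1 (t2 - t1)" using t(3) ge_neg[of 1 "t1 - t2"] by simp
        ultimately have "ge 1 (x - t1)" using tt True ge_add by metis
        then show ?thesis using t ne by auto
      next
        case False
        then show ?thesis using tt by auto
      qed
    qed
    then have "card T \<le> card (T - {t2})" by (rule minT)
    moreover have "card (T - {t2}) < card T" using finT t(2) by (rule card_Diff1_less)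
    ultimately show False by simp
  qed
  define rep where "rep x = (SOME t. t \<in> T \<and> ge 1 (x - t))" for x
  have rep: "rep x \<in> T \<and> ge 1 (x - rep x)" if "ge 0 x" for x
    unfolding rep_def using cov[OF that] by (rule someI2_bex) auto
  have rep_eq: "ge 1 (x - y)" if "ge 0 x" "ge 0 y" "rep x = rep y" for x y
  proof -
    have "x - y = (x - rep x) - (y - rep y)" using that(3) by simp
    then show ?thesis using rep[OF that(1)] rep[OF that(2)] ge_diff by metis
  qed
  have rep_same: "rep x = t" if "ge 0 x" "t \<in> T" "ge 1 (x - t)" for x t
  proof -
    have "rep x - t = (x - t) - (x - rep x)" by simp
    then have "ge 1 (rep x - t)" using rep[OF that(1)] that(3) ge_diff by metis
    then show ?thesis using dist rep[OF that(1)] that(2) by blast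
  qed
  define t0 where "t0 = rep 0"
  have t0: "t0 \<in> T" "ge 1 t0" using rep[of 0] ge_neg[of 1 t0] by (auto simp: t0_def)
  have key: "y = x \<or> y = rep (- x)" if "x \<in> T" "y \<in> T" "ge 1 (x * x - y * y)" for x y
  proof -
    have "ge 1 ((x - y) * (x + y))" using that(3) by (simp add: algebra_simps)
    moreover have "ge 0 (x - y)" "ge 0 (x + y)" using T0 that by (auto intro: ge_diff ge_add)
    ultimately have "ge 1 (x - y) \<or> ge 1 (x + y)" using prime_m by blast
    then show ?thesis
    proof
      assume "ge 1 (x - y)" then show ?thesis using dist that by auto
    next
      assume "ge 1 (x + y)"
      then have "ge 1 (- x - y)" using ge_neg[of 1 "x + y"] by (simp add: algebra_simps)
      then have "rep (- x) = y" using that T0 by (intro rep_same) (auto simp: ge_neg)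
      then show ?thesis by simp
    qed
  qed
  have zkey: "x = t0" if "x \<in> T" "ge 1 (x * x - t0 * t0)" for x
  proof -
    have "ge (1 + 0) (t0 * t0)" using t0 T0 by (intro ge_mult) auto
    then have g: "ge 1 (t0 * t0)" by simp
    have "ge 1 ((x * x - t0 * t0) + t0 * t0)" by (rule ge_add[OF that(2) g])
    then have "ge 1 x" by (auto intro: sq_ge1)
    then have "ge 1 (x - t0)" using t0 ge_diff by blast
    then show ?thesis using dist that t0 by blast
  qed
  have u0': "ge 0 u" using vu by (simp add: ge_def)
  define h1 where "h1 x = rep (x * x)" for x
  define h2 where "h2 x = rep (u + eps * x * x)" for x
  have a1: "ge 0 (x * x)" if "x \<in> T" for x using T0 that ge0_mult by blast
  have a2: "ge 0 (u + eps * x * x)" if "x \<in> T" for x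
    using T0 that u0' by (intro ge_add ge0_mult ge0_eps) auto
  have e2: "ge 1 (x * x - y * y)" if "x \<in> T" "y \<in> T" "h2 x = h2 y" for x y
  proof -
    have "ge 1 ((u + eps * x * x) - (u + eps * y * y))" using rep_eq a2 that unfolding h2_def by blast
    moreover have "(u + eps * x * x) - (u + eps * y * y) = eps * (x * x - y * y)"
      by (simp add: algebra_simps)
    ultimately show ?thesis using eps_unit ge_unit_mult by metis
  qed
  have e1: "ge 1 (x * x - y * y)" if "x \<in> T" "y \<in> T" "h1 x = h1 y" for x y
    using rep_eq a1 that unfolding h1_def by blast
  have c1: "card T + 1 \<le> 2 * card (h1 ` T)"
  proof (rule card_fib[OF finT t0(1), where \<sigma>="\<lambda>x. rep (- x)"])
    fix x assume "x \<in> T" "h1 x = h1 t0" then show "x = t0" using zkey e1 t0 by blast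
  next
    fix x y assume "x \<in> T" "y \<in> T" "h1 x = h1 y" then show "y = x \<or> y = rep (- x)" using key e1 by blast
  qed
  have c2: "card T + 1 \<le> 2 * card (h2 ` T)"
  proof (rule card_fib[OF finT t0(1), where \<sigma>="\<lambda>x. rep (- x)"])
    fix x assume "x \<in> T" "h2 x = h2 t0" then show "x = t0" using zkey e2 t0 by blast
  next
    fix x y assume "x \<in> T" "y \<in> T" "h2 x = h2 y" then show "y = x \<or> y = rep (- x)" using key e2 by blast
  qed
  have s1: "h1 ` T \<subseteq> T" using rep a1 unfolding h1_def by auto
  have s2: "h2 ` T \<subseteq> T" using rep a2 unfolding h2_def by auto
  have "card (h1 ` T \<union> h2 ` T) \<le> card T" using s1 s2 finT by (intro card_mono) auto
  moreover have "card (h1 ` T) + card (h2 ` T) = card (h1 ` T \<union> h2 ` T) + card (h1 ` T \<inter> h2 ` T)"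
    using finT by (intro card_Un_Int) auto
  ultimately have "card (h1 ` T \<inter> h2 ` T) \<noteq> 0" using c1 c2 by linarith
  then have "h1 ` T \<inter> h2 ` T \<noteq> {}" by (metis card.empty)
  then obtain z where "z \<in> h1 ` T" "z \<in> h2 ` T" by blast
  then obtain x y where xy: "x \<in> T" "y \<in> T" "h1 x = h2 y" by (metis imageE)
  then have "ge 1 (x * x - (u + eps * y * y))" using rep_eq a1 a2 unfolding h1_def h2_def by blast
  then have "ge 1 (x * x - eps * y * y - u)" by (simp add: algebra_simps)
  then show ?thesis using xy T0 by blast
qed

lemma norm_surj:
  assumes u0: "u \<noteq> 0" and vu: "v u = 0"
  shows "\<exists>x y. x * x - eps * y * y = u"
proof -
  obtain x y where xy: "ge 0 x" "ge 0 y" "ge 1 (x * x - eps * y * y - u)"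
    using residue_norm[OF assms] by blast
  define N0 where "N0 = x * x - eps * y * y"
  have "N0 = u + (x * x - eps * y * y - u)" by (simp add: N0_def)
  then have N0: "N0 \<noteq> 0" "v N0 = 0" using unit_add[OF u0 vu xy(3)] by auto
  define w where "w = u / N0"
  have w: "w \<noteq> 0" "v w = 0" using N0 u0 vu by (auto simp: w_def vdiv)
  have "1 * 1 - w = (N0 - u) / N0" using N0 by (simp add: w_def diff_divide_distrib)
  then have "1 * 1 - w = (x * x - eps * y * y - u) / N0" by (simp add: N0_def)
  moreover have "ge 1 ((x * x - eps * y * y - u) / N0)"
    using xy(3) N0 by (cases "x * x - eps * y * y - u = 0") (auto simp: ge_def vdiv)
  ultimately have "ge 1 (1 * 1 - w)" by simp
  then obtain s where s: "s * s = w" using hensel[OF w] by blast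
  have "(x * s) * (x * s) - eps * (y * s) * (y * s) = (s * s) * N0" by (simp add: N0_def algebra_simps)
  also have "\<dots> = u" using s N0 by (simp add: w_def)
  finally show ?thesis by blast
qed

end



lemma M2p: obtains a1 a2 b1 b2 c1 c2 d1 d2 where "g = M2 (a1,a2) (b1,b2) (c1,c2) (d1,d2)"
  by (metis M2.exhaust surj_pair)

lemma emul_assoc: "emul e (emul e x y) z = emul e x (emul e y z)"
  by (cases x; cases y; cases z) (simp add: algebra_simps)
lemma emul_comm: "emul e x y = emul e y x"
  by (cases x; cases y) (simp add: algebra_simps)
lemma emul_lcomm: "emul e x (emul e y z) = emul e y (emul e x z)"
  by (metis emul_assoc emul_comm)
lemma emul_distL: "emul e x (eadd y z) = eadd (emul e x y) (emul e x z)"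
  by (cases x; cases y; cases z) (simp add: algebra_simps)
lemma emul_distR: "emul e (eadd y z) x = eadd (emul e y x) (emul e z x)"
  by (cases x; cases y; cases z) (simp add: algebra_simps)
lemma eadd_assoc: "eadd (eadd x y) z = eadd x (eadd y z)"
  by (cases x; cases y; cases z) (simp add: algebra_simps)
lemma eadd_comm: "eadd x y = eadd y x"
  by (cases x; cases y) (simp add: algebra_simps)
lemma eadd_lcomm: "eadd x (eadd y z) = eadd y (eadd x z)"
  by (metis eadd_assoc eadd_comm)
lemmas eac = emul_assoc emul_comm emul_lcomm emul_distL emul_distR eadd_assoc eadd_comm eadd_lcomm

lemma mmul_assoc: "mmul e (mmul e A B) C = mmul e A (mmul e B C)"
  by (cases A; cases B; cases C) (simp add: eac)

lemma econj_add: "econj (eadd x y) = eadd (econj x) (econj y)"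
  by (cases x; cases y) simp
lemma econj_mul: "econj (emul e x y) = emul e (econj x) (econj y)"
  by (cases x; cases y) simp

lemma mmul_mone_left[simp]: "mmul e mone A = A"
  by (rule M2p[of A]) (simp add: mone_def eone_def ezero_def)

lemma mmul_mone_right[simp]: "mmul e A mone = A"
  by (rule M2p[of A]) (simp add: mone_def eone_def ezero_def)

lemma mconjT_mmul: "mconjT (mmul e A B) = mmul e (mconjT B) (mconjT A)"
  by (cases A; cases B) (simp add: econj_add econj_mul eac)

lemma mconjT_mone[simp]: "mconjT mone = mone"
  by (simp add: mone_def eone_def ezero_def)

fun ginv :: "'a::field ext M2 \<Rightarrow> 'a ext M2" where
  "ginv (M2 a b c d) = M2 (econj d) (econj b) (econj c) (econj a)"

definition unitary :: "'a::field \<Rightarrow> 'a ext M2 \<Rightarrow> bool" where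
  "unitary e g \<longleftrightarrow> mmul e (mconjT g) (mmul e wmat g) = wmat"

lemma emul_z1[simp]: "emul e ezero x = ezero" by (cases x) (simp add: ezero_def)
lemma emul_z2[simp]: "emul e x ezero = ezero" by (cases x) (simp add: ezero_def)
lemma emul_o1[simp]: "emul e eone x = x" by (cases x) (simp add: eone_def)
lemma emul_o2[simp]: "emul e x eone = x" by (cases x) (simp add: eone_def)
lemma eadd_z1[simp]: "eadd ezero x = x" by (cases x) (simp add: ezero_def)
lemma eadd_z2[simp]: "eadd x ezero = x" by (cases x) (simp add: ezero_def)

lemma mmul_wmat_left: "mmul e wmat (M2 a b c d) = M2 c d a b"
  by (simp add: wmat_def)

lemma unitary_M2: "unitary e (M2 a b c d) \<longleftrightarrow>
   eadd (emul e (econj a) c) (emul e (econj c) a) = ezero \<and>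
   eadd (emul e (econj a) d) (emul e (econj c) b) = eone \<and>
   eadd (emul e (econj b) c) (emul e (econj d) a) = eone \<and>
   eadd (emul e (econj b) d) (emul e (econj d) b) = ezero"
  by (simp add: unitary_def mmul_wmat_left) (simp add: wmat_def)

lemma ginv_left: "unitary e g \<Longrightarrow> mmul e (ginv g) g = mone"
  by (cases g) (simp add: unitary_M2 mone_def eadd_comm)

lemma unitary_mult: "unitary e g \<Longrightarrow> unitary e h \<Longrightarrow> unitary e (mmul e g h)"
  unfolding unitary_def
  by (metis mconjT_mmul mmul_assoc)

lemma GL2_mult: "g \<in> GL2 e \<Longrightarrow> h \<in> GL2 e \<Longrightarrow> mmul e g h \<in> GL2 e"
  unfolding GL2_def
proof (clarsimp)
  fix g' h' assume a: "mmul e g g' = mone" "mmul e g' g = mone" "mmul e h h' = mone" "mmul e h' h = mone"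
  show "\<exists>k. mmul e (mmul e g h) k = mone \<and> mmul e k (mmul e g h) = mone"
    by (rule exI[of _ "mmul e h' g'"]) (metis a mmul_assoc mmul_mone_left)
qed

lemma ginv_right: "g \<in> GL2 e \<Longrightarrow> unitary e g \<Longrightarrow> mmul e g (ginv g) = mone"
proof -
  assume "g \<in> GL2 e" "unitary e g"
  then obtain h where h: "mmul e g h = mone" "mmul e h g = mone" by (auto simp: GL2_def)
  have "ginv g = mmul e (mmul e (ginv g) g) h" using h by (simp add: mmul_assoc)
  then have "ginv g = h" using ginv_left[OF \<open>unitary e g\<close>] by simp
  then show ?thesis using h by simp
qed

lemma ginv_GL2: "g \<in> GL2 e \<Longrightarrow> unitary e g \<Longrightarrow> ginv g \<in> GL2 e"
proof -
  assume a: "g \<in> GL2 e" "unitary e g"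
  have "mmul e (ginv g) g = mone \<and> mmul e g (ginv g) = mone"
    using ginv_left[OF a(2)] ginv_right[OF a] by simp
  then show ?thesis unfolding GL2_def by blast
qed

lemma ginv_unitary: "g \<in> GL2 e \<Longrightarrow> unitary e g \<Longrightarrow> unitary e (ginv g)"
proof -
  assume a: "g \<in> GL2 e" "unitary e g"
  define h where "h = ginv g"
  have gh: "mmul e g h = mone" using ginv_right[OF a] h_def by simp
  have "mmul e (mconjT h) (mmul e wmat h) = mmul e (mconjT h) (mmul e (mmul e (mconjT g) (mmul e wmat g)) h)"
    using a(2) by (simp add: unitary_def)
  also have "\<dots> = mmul e (mconjT (mmul e g h)) (mmul e wmat (mmul e g h))"
    by (simp add: mconjT_mmul mmul_assoc)
  also have "\<dots> = wmat" using gh by simp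
  finally show ?thesis by (simp add: unitary_def h_def)
qed

lemma ginv_mone[simp]: "ginv mone = mone" by (simp add: mone_def eone_def ezero_def)

lemma lower_left_ginv[simp]: "lower_left (ginv g) = econj (lower_left g)"
  by (cases g) simp




lemma enorm_emul: "enorm e (emul e x y) = enorm e x * enorm e y"
  by (cases x; cases y) (simp add: algebra_simps)
lemma enorm_econj: "enorm e (econj x) = enorm e x"
  by (cases x) simp

context LF begin

lemma OE_pair: "(p, q) \<in> OE v eps \<longleftrightarrow> ge 0 p \<and> ge 0 q"
  using OE_iff[of "(p, q)"] by (simp add: OE_def)

lemma OE_eadd: "x \<in> OE v eps \<Longrightarrow> y \<in> OE v eps \<Longrightarrow> eadd x y \<in> OE v eps"
  by (cases x; cases y) (auto simp: OE_pair intro: ge_add)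

lemma OE_emul: "x \<in> OE v eps \<Longrightarrow> y \<in> OE v eps \<Longrightarrow> emul eps x y \<in> OE v eps"
  by (cases x; cases y) (auto simp: OE_pair intro!: ge_add ge0_mult ge0_eps)

lemma OE_econj: "x \<in> OE v eps \<Longrightarrow> econj x \<in> OE v eps"
  by (cases x) (auto simp: OE_pair ge_neg)

lemma OE_ezero[simp]: "ezero \<in> OE v eps" by (simp add: ezero_def OE_pair)
lemma OE_eone[simp]: "eone \<in> OE v eps" by (simp add: eone_def OE_pair)

lemma enorm_zero_iff: "enorm eps z = 0 \<longleftrightarrow> z = ezero"
proof (cases z)
  case (Pair a b)
  show ?thesis
  proof
    assume "enorm eps z = 0"
    then have "a * a - eps * b * b = 0" using Pair by simp
    from norm_zero[OF this] show "z = ezero" using Pair by (simp add: ezero_def)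
  qed (simp add: Pair ezero_def)
qed

lemma K_iff: "g \<in> Kgrp v eps \<longleftrightarrow> g \<in> GL2 eps \<and> unitary eps g \<and> entries g \<subseteq> OE v eps"
  by (auto simp: Kgrp_def Ugrp_def unitary_def)

lemma B_iff: "g \<in> Bgrp v eps \<longleftrightarrow> g \<in> Kgrp v eps \<and> lower_left g = ezero"
  by (simp add: Bgrp_def)

lemma entries_mmul: "entries g \<subseteq> OE v eps \<Longrightarrow> entries h \<subseteq> OE v eps \<Longrightarrow> entries (mmul eps g h) \<subseteq> OE v eps"
  by (cases g; cases h) (auto intro!: OE_eadd OE_emul)

lemma entries_ginv: "entries g \<subseteq> OE v eps \<Longrightarrow> entries (ginv g) \<subseteq> OE v eps"
  by (cases g) (auto intro!: OE_econj)

lemma K_mult: "g \<in> Kgrp v eps \<Longrightarrow> h \<in> Kgrp v eps \<Longrightarrow> mmul eps g h \<in> Kgrp v eps"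
  by (simp add: K_iff GL2_mult unitary_mult entries_mmul)

lemma K_ginv: "g \<in> Kgrp v eps \<Longrightarrow> ginv g \<in> Kgrp v eps"
  by (simp add: K_iff ginv_GL2 ginv_unitary entries_ginv)

lemma K_ginv_left: "g \<in> Kgrp v eps \<Longrightarrow> mmul eps (ginv g) g = mone"
  by (simp add: K_iff ginv_left)

lemma K_ginv_right: "g \<in> Kgrp v eps \<Longrightarrow> mmul eps g (ginv g) = mone"
  by (simp add: K_iff ginv_right)

lemma B_ginv: "g \<in> Bgrp v eps \<Longrightarrow> ginv g \<in> Bgrp v eps"
  by (simp add: B_iff K_ginv ezero_def)

lemma mone_K: "mone \<in> Kgrp v eps"
proof -
  have "mone \<in> GL2 eps" unfolding GL2_def by (rule CollectI, rule exI[of _ mone]) simp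
  moreover have "unitary eps mone" by (simp add: unitary_def)
  ultimately show ?thesis by (simp add: K_iff mone_def)
qed

lemma mone_B: "mone \<in> Bgrp v eps"
  using mone_K by (simp add: B_iff mone_def)

lemma coset_crit:
  assumes r: "r \<in> Kgrp v eps" and b: "b \<in> Bgrp v eps" and g: "g \<in> Kgrp v eps"
    and ll: "lower_left (mmul eps (ginv r) (mmul eps b g)) = ezero"
  shows "g \<in> dcoset v eps r"
proof -
  define b2 where "b2 = mmul eps (ginv r) (mmul eps b g)"
  have bK: "b \<in> Kgrp v eps" using b by (simp add: B_iff)
  have b2: "b2 \<in> Bgrp v eps" unfolding B_iff b2_def using ll K_mult K_ginv r bK g by simp
  have b1: "ginv b \<in> Bgrp v eps" using B_ginv b by simp
  have "mmul eps (ginv b) (mmul eps r b2) = mmul eps (mmul eps (ginv b) b) g"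
    unfolding b2_def by (simp add: mmul_assoc[symmetric] K_ginv_right[OF r])
  also have "\<dots> = g" using K_ginv_left[OF bK] by simp
  finally show ?thesis unfolding dcoset_def using b1 b2 by blast
qed

end



lemma econj_ezero[simp]: "econj ezero = ezero" by (simp add: ezero_def)
lemma econj_eone[simp]: "econj eone = eone" by (simp add: eone_def)
lemma enorm_eone[simp]: "enorm e eone = 1" by (simp add: eone_def)

lemma ll_dcoset: "lower_left (mmul e (M2 a b ezero d) (mmul e r (M2 a' b' ezero d'))) = emul e d (emul e (lower_left r) a')"
  by (cases r) simp

context LF begin

definition inv :: "'a ext \<Rightarrow> int" where
  "inv z = (if z = ezero then -1 else v (enorm eps z))"

lemma B_diag:
  assumes "b \<in> Bgrp v eps"
  shows "\<exists>a c d. b = M2 a c ezero d \<and> enorm eps a \<noteq> 0 \<and> v (enorm eps a) = 0 \<and> enorm eps d \<noteq> 0 \<and> v (enorm eps d) = 0"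
proof -
  obtain a c z d where b: "b = M2 a c z d" by (cases b)
  have z: "z = ezero" using assms b by (simp add: B_iff)
  have K: "b \<in> Kgrp v eps" using assms by (simp add: B_iff)
  then have "unitary eps b" "entries b \<subseteq> OE v eps" by (auto simp: K_iff)
  then have e: "emul eps (econj a) d = eone" and ad: "a \<in> OE v eps" "d \<in> OE v eps"
    using b z by (auto simp: unitary_M2)
  have n: "enorm eps a * enorm eps d = 1" using arg_cong[OF e, of "enorm eps"]
    by (simp add: enorm_emul enorm_econj)
  have g: "ge 0 (enorm eps a)" "ge 0 (enorm eps d)" using ad by (auto simp: OE_def OF_ge)
  have nz: "enorm eps a \<noteq> 0" "enorm eps d \<noteq> 0" using n by auto
  have "v (enorm eps a) + v (enorm eps d) = 0" using n nz vmult v1 by metis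
  then have "v (enorm eps a) = 0 \<and> v (enorm eps d) = 0" using g nz by (auto simp: ge_def)
  then show ?thesis using b z nz by blast
qed

lemma inv_dcoset:
  assumes "g \<in> dcoset v eps r"
  shows "inv (lower_left g) = inv (lower_left r)"
proof -
  obtain b1 b2 where b: "b1 \<in> Bgrp v eps" "b2 \<in> Bgrp v eps" "g = mmul eps b1 (mmul eps r b2)"
    using assms unfolding dcoset_def by blast
  obtain a c d where b1: "b1 = M2 a c ezero d" "enorm eps d \<noteq> 0" "v (enorm eps d) = 0"
    using B_diag[OF b(1)] by blast
  obtain a' c' d' where b2: "b2 = M2 a' c' ezero d'" "enorm eps a' \<noteq> 0" "v (enorm eps a') = 0"
    using B_diag[OF b(2)] by blast
  have ll: "lower_left g = emul eps d (emul eps (lower_left r) a')"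
    using b(3) b1 b2 by (simp add: ll_dcoset)
  show ?thesis
  proof (cases "lower_left r = ezero")
    case True
    then show ?thesis using ll by (simp add: inv_def)
  next
    case False
    then have nr: "enorm eps (lower_left r) \<noteq> 0" by (simp add: enorm_zero_iff)
    have en: "enorm eps (lower_left g) = enorm eps d * (enorm eps (lower_left r) * enorm eps a')"
      using ll by (simp add: enorm_emul)
    then have "enorm eps (lower_left g) \<noteq> 0" using nr b1 b2 by simp
    then have "lower_left g \<noteq> ezero" by (simp add: enorm_zero_iff)
    moreover have "v (enorm eps (lower_left g)) = v (enorm eps (lower_left r))"
      using en nr b1 b2 by (simp add: vmult)
    ultimately show ?thesis using False by (simp add: inv_def)
  qed
qed

definition rk :: "nat \<Rightarrow> 'a ext M2" where
  "rk k = M2 eone ezero (0, pi ^ k) eone"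

lemma reps_eq: "reps pi = {mone, wmat} \<union> {rk k | k. 1 \<le> k}"
  by (simp add: reps_def rk_def)

lemma inv_mone: "inv (lower_left mone) = -1" by (simp add: inv_def mone_def)
lemma inv_wmat: "inv (lower_left wmat) = 0"
  by (simp add: inv_def wmat_def v1 eone_def ezero_def)
lemma inv_rk: "inv (lower_left (rk k)) = 2 * int k"
proof -
  have p: "pi ^ k \<noteq> 0" using pi0 by simp
  have "enorm eps (0, pi ^ k) = - (eps * (pi ^ k * pi ^ k))" by (simp add: algebra_simps)
  then have "v (enorm eps (0, pi ^ k)) = 2 * int k" using p eps_unit pi0
    by (simp add: vneg vmult vpow vpi)
  then show ?thesis using p by (simp add: inv_def rk_def ezero_def)
qed

lemma wmat_K: "wmat \<in> Kgrp v eps"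
proof -
  have "mmul eps wmat wmat = mone" by (simp add: wmat_def mone_def)
  then have "wmat \<in> GL2 eps" unfolding GL2_def by blast
  moreover have "unitary eps wmat" by (simp add: wmat_def unitary_M2)
  ultimately show ?thesis by (simp add: K_iff wmat_def)
qed

lemma rk_K: "rk k \<in> Kgrp v eps"
proof -
  have "mmul eps (rk k) (M2 eone ezero (0, - (pi ^ k)) eone) = mone \<and>
        mmul eps (M2 eone ezero (0, - (pi ^ k)) eone) (rk k) = mone"
    by (simp add: rk_def mone_def eone_def ezero_def)
  then have "rk k \<in> GL2 eps" unfolding GL2_def by blast
  moreover have "unitary eps (rk k)" by (simp add: rk_def unitary_M2 eone_def ezero_def)
  moreover have "ge 0 (pi ^ k)" using pi0 by (simp add: ge_def vpow vpi)
  ultimately show ?thesis by (simp add: K_iff rk_def OE_pair)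
qed

lemma reps_K: "reps pi \<subseteq> Kgrp v eps"
  using mone_K wmat_K rk_K by (auto simp: reps_eq)

lemma reps_unique:
  assumes "r \<in> reps pi" "r' \<in> reps pi" "g \<in> dcoset v eps r" "g \<in> dcoset v eps r'"
  shows "r = r'"
proof -
  have e: "inv (lower_left r) = inv (lower_left r')" using inv_dcoset assms(3,4) by metis
  show ?thesis using assms(1,2) e by (auto simp: reps_eq inv_mone inv_wmat inv_rk)
qed

end



lemma h_unit_case:
  fixes a1 a2 c1 c2 e N :: "'a::field"
  assumes N: "N = c1 * c1 - e * c2 * c2" and N0: "N \<noteq> 0" and tr: "a1 * c1 = e * a2 * c2"
  shows "a1 + e * ((a1 * c2 - a2 * c1) / N) * c2 = 0 \<and> a2 + ((a1 * c2 - a2 * c1) / N) * c1 = 0"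
proof -
  have i1: "a1 * N + e * (a1 * c2 - a2 * c1) * c2 = c1 * (a1 * c1 - e * a2 * c2)" by (simp add: N algebra_simps)
  have i2: "a2 * N + (a1 * c2 - a2 * c1) * c1 = c2 * (a1 * c1 - e * a2 * c2)" by (simp add: N algebra_simps)
  have "a1 * N + e * (a1 * c2 - a2 * c1) * c2 = 0" "a2 * N + (a1 * c2 - a2 * c1) * c1 = 0"
    using i1 i2 tr by simp_all
  then show ?thesis using N0 by (simp add: field_simps)
qed

lemma h_c_eq:
  fixes a1 a2 c1 c2 e Na t :: "'a::field"
  assumes Na: "Na = a1 * a1 - e * a2 * a2" and N0: "Na \<noteq> 0" and tr: "a1 * c1 = e * a2 * c2"
    and t: "t = a1 * c2 - a2 * c1"
  shows "(c1, c2) = emul e (0, t / Na) (a1, a2)"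
proof -
  have i1: "c1 * Na - e * t * a2 = a1 * (a1 * c1 - e * a2 * c2)" by (simp add: Na t algebra_simps)
  have i2: "c2 * Na - t * a1 = a2 * (a1 * c1 - e * a2 * c2)" by (simp add: Na t algebra_simps)
  have "c1 * Na = e * t * a2" "c2 * Na = t * a1" using i1 i2 tr by simp_all
  then show ?thesis using N0 by (simp add: field_simps)
qed

lemma h_final:
  fixes x y u P :: "'a::field"
  assumes u0: "u \<noteq> 0"
  shows "eadd (emul e (0, - P) (emul e (x, y) a)) (emul e (x / u, y / u) (emul e (0, u * P) a)) = ezero"
proof -
  have "emul e (x / u, y / u) (0, u * P) = emul e (x, y) (0, P)" using u0 by (simp add: field_simps)
  then have "emul e (x / u, y / u) (emul e (0, u * P) a) = emul e (emul e (x, y) (0, P)) a"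
    by (metis emul_assoc)
  then show ?thesis by (cases a) (simp add: ezero_def algebra_simps)
qed

context LF begin

lemma ge_div_unit: "ge n x \<Longrightarrow> u \<noteq> 0 \<Longrightarrow> v u = 0 \<Longrightarrow> ge n (x / u)"
  by (cases "x = 0") (auto simp: ge_def vdiv)

lemma ge1_mult: "ge 1 x \<Longrightarrow> ge 0 y \<Longrightarrow> ge 1 (x * y)"
  using ge_mult[of 1 x 0 y] by simp
lemma ge1_mult': "ge 0 x \<Longrightarrow> ge 1 y \<Longrightarrow> ge 1 (x * y)"
  using ge_mult[of 0 x 1 y] by simp

lemma exist_rep:
  assumes gK: "g \<in> Kgrp v eps"
  shows "\<exists>r. r \<in> reps pi \<and> g \<in> dcoset v eps r"
proof -
  obtain a1 a2 b1 b2 c1 c2 d1 d2 where g: "g = M2 (a1, a2) (b1, b2) (c1, c2) (d1, d2)" by (rule M2p)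
  have U: "unitary eps g" and ent: "entries g \<subseteq> OE v eps" using gK by (auto simp: K_iff)
  have ge0: "ge 0 a1" "ge 0 a2" "ge 0 b1" "ge 0 b2" "ge 0 c1" "ge 0 c2" "ge 0 d1" "ge 0 d2"
    using ent g by (auto simp: OE_pair)
  have E11: "a1 * c1 + eps * (- a2) * c2 + (c1 * a1 + eps * (- c2) * a2) = 0"
    using U g by (simp add: unitary_M2 ezero_def)
  have E12: "a1 * d1 + eps * (- a2) * d2 + (c1 * b1 + eps * (- c2) * b2) = 1"
     "a1 * d2 + (- a2) * d1 + (c1 * b2 + (- c2) * b1) = 0"
    using U g by (simp_all add: unitary_M2 eone_def)
  have "2 * (a1 * c1 - eps * a2 * c2) = 0" using E11 by (simp add: algebra_simps)
  then have tr: "a1 * c1 = eps * a2 * c2" using two by simp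
  define Nc where "Nc = c1 * c1 - eps * c2 * c2"
  have Nc0: "ge 0 Nc" unfolding Nc_def using norm_ge0[OF ge0(5,6)] .
  show ?thesis
  proof (cases "(c1, c2) = ezero")
    case True
    have "g \<in> dcoset v eps mone"
      by (rule coset_crit[OF mone_K mone_B gK]) (simp add: g True)
    then show ?thesis by (auto simp: reps_def)
  next
    case False
    then have Nnz: "Nc \<noteq> 0" using enorm_zero_iff[of "(c1, c2)"] by (simp add: Nc_def)
    show ?thesis
    proof (cases "v Nc = 0")
      case True
      define s where "s = (a1 * c2 - a2 * c1) / Nc"
      define b' where "b' = M2 eone (0, s) ezero eone"
      have "mmul eps b' (M2 eone (0, - s) ezero eone) = mone \<and> mmul eps (M2 eone (0, - s) ezero eone) b' = mone"
        by (simp add: b'_def mone_def eone_def ezero_def)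
      then have "b' \<in> GL2 eps" unfolding GL2_def by blast
      moreover have "unitary eps b'" by (simp add: b'_def unitary_M2 eone_def ezero_def)
      moreover have "ge 0 s" unfolding s_def using ge0 Nnz True
        by (intro ge_div_unit ge_diff ge0_mult) auto
      ultimately have bB: "b' \<in> Bgrp v eps" by (simp add: B_iff K_iff b'_def OE_pair)
      have ginvw: "ginv wmat = wmat" by (simp add: wmat_def)
      have "g \<in> dcoset v eps wmat"
      proof (rule coset_crit[OF wmat_K bB gK])
        show "lower_left (mmul eps (ginv wmat) (mmul eps b' g)) = ezero"
          using h_unit_case[OF Nc_def Nnz tr]
          by (simp add: ginvw g b'_def wmat_def ezero_def eone_def s_def)
      qed
      then show ?thesis by (auto simp: reps_def)
    next
      case False
      then have Nc1: "ge 1 Nc" using Nc0 Nnz by (auto simp: ge_def)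
      have c1: "ge 1 c1" "ge 1 c2" using aniso[OF ge0(5,6)] Nc1 by (auto simp: Nc_def)
      define x1 where "x1 = a1 * d1 + eps * (- a2) * d2"
      define x2 where "x2 = a1 * d2 + (- a2) * d1"
      define y1 where "y1 = c1 * b1 + eps * (- c2) * b2"
      define y2 where "y2 = c1 * b2 + (- c2) * b1"
      have nc2: "ge 1 (- c2)" using c1 by (simp add: ge_neg)
      have y: "ge 1 y1" "ge 1 y2" unfolding y1_def y2_def
        by (intro ge_add ge1_mult ge1_mult' ge0_eps c1 nc2 ge0)+
      have x: "x1 = 1 - y1" "x2 = - y2" using E12 by (auto simp: x1_def x2_def y1_def y2_def algebra_simps)
      have nx1: "\<not> ge 1 x1"
      proof
        assume "ge 1 x1"
        then have "ge 1 (x1 + y1)" using y ge_add by blast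
        then show False using x by (simp add: ge_def v1)
      qed
      have y0: "ge 0 y1" "ge 0 y2" using y ge_mono[of 0 1] by auto
      have gx: "ge 0 x1" "ge 0 x2" using x ge_diff[OF ge_one y0(1)] y0(2) by (auto simp: ge_neg)
      have NX: "x1 * x1 - eps * x2 * x2 \<noteq> 0 \<and> v (x1 * x1 - eps * x2 * x2) = 0"
        using norm_scale[of 1 x1 x2] gx nx1 by (simp add: v1)
      define Na where "Na = a1 * a1 - eps * a2 * a2"
      define Nd where "Nd = d1 * d1 - eps * d2 * d2"
      have "x1 * x1 - eps * x2 * x2 = enorm eps (emul eps (econj (a1, a2)) (d1, d2))"
        by (simp add: x1_def x2_def)
      also have "\<dots> = Na * Nd" by (simp add: enorm_emul enorm_econj Na_def Nd_def del: enorm.simps emul.simps econj.simps) (simp add: Na_def Nd_def)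
      finally have NaNd: "Na * Nd \<noteq> 0 \<and> v (Na * Nd) = 0" using NX by simp
      have gNa: "ge 0 Na" "ge 0 Nd" unfolding Na_def Nd_def using ge0 by (auto intro: norm_ge0)
      have Na: "Na \<noteq> 0" "v Na = 0" using NaNd gNa vmult[of Na Nd] by (auto simp: ge_def)
      define t where "t = a1 * c2 - a2 * c1"
      have "- (eps * t * t) = enorm eps (emul eps (econj (a1, a2)) (c1, c2))"
        using tr by (simp add: t_def)
      also have "\<dots> = Na * Nc" by (simp add: enorm_emul enorm_econj Na_def Nc_def del: enorm.simps emul.simps econj.simps) (simp add: Na_def Nc_def)
      finally have et: "- (eps * t * t) = Na * Nc" .
      then have t0: "t \<noteq> 0" using Na Nnz by auto
      have "v (- (eps * t * t)) = v Nc" using et Na Nnz by (simp add: vmult)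
      then have "2 * v t = v Nc" using t0 eps_unit by (simp add: vneg vmult)
      then have vt: "v t \<ge> 1" using Nc1 Nnz by (simp add: ge_def)
      define k where "k = nat (v t)"
      have k: "int k = v t" "1 \<le> k" using vt k_def by auto
      define P where "P = pi ^ k"
      have P: "P \<noteq> 0" "v P = int k" using pi0 by (auto simp: P_def vpow vpi)
      define u where "u = t / (P * Na)"
      have u: "u \<noteq> 0" "v u = 0" using t0 P Na k by (auto simp: u_def vdiv vmult)
      obtain x y where xy: "x * x - eps * y * y = u" using norm_surj[OF u] by blast
      have gxy: "ge 0 x" "ge 0 y" using OE_iff[of "(x, y)"] xy u by (auto simp: OF_ge ge_def)
      define b' where "b' = M2 (x, y) ezero ezero (x / u, y / u)"
      have "mmul eps b' (M2 (x / u, - y / u) ezero ezero (x, - y)) = mone \<and>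
            mmul eps (M2 (x / u, - y / u) ezero ezero (x, - y)) b' = mone"
        using u xy by (simp add: b'_def mone_def eone_def ezero_def field_simps)
      then have "b' \<in> GL2 eps" unfolding GL2_def by blast
      moreover have "unitary eps b'" using u xy
        by (simp add: b'_def unitary_M2 eone_def ezero_def field_simps)
      moreover have "ge 0 (x / u)" "ge 0 (y / u)" using gxy u by (auto intro: ge_div_unit)
      ultimately have bB: "b' \<in> Bgrp v eps" using gxy by (simp add: B_iff K_iff b'_def OE_pair)
      have ceq: "(c1, c2) = emul eps (0, u * P) (a1, a2)"
        using h_c_eq[OF Na_def Na(1) tr t_def] P Na by (simp add: u_def)
      have ginvr: "ginv (rk k) = M2 eone ezero (0, - P) eone" by (simp add: rk_def P_def)
      have "g \<in> dcoset v eps (rk k)"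
      proof (rule coset_crit[OF rk_K bB gK])
        have "lower_left (mmul eps (ginv (rk k)) (mmul eps b' g)) =
          eadd (emul eps (0, - P) (emul eps (x, y) (a1, a2))) (emul eps (x / u, y / u) (c1, c2))"
          by (simp add: ginvr b'_def g del: emul.simps) 
        also have "\<dots> = ezero" unfolding ceq by (rule h_final[OF u(1)])
        finally show "lower_left (mmul eps (ginv (rk k)) (mmul eps b' g)) = ezero" .
      qed
      then show ?thesis using k by (auto simp: reps_eq)
    qed
  qed
qed

end


theorem proposition2p2:
  fixes v :: "'a::field \<Rightarrow> int" and eps pi :: 'a
  assumes "nonarch_local_field v"
    and "odd_residual_char v"
    and "eps \<in> units_OF v"
    and "\<not> (\<exists>x. x * x = eps)"
    and "pi \<noteq> 0" and "v pi = 1"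
  shows "reps pi \<subseteq> Kgrp v eps \<and>
         (\<forall>g \<in> Kgrp v eps. \<exists>!r. r \<in> reps pi \<and> g \<in> dcoset v eps r)"
proof -
  interpret LF v eps pi using assms by unfold_locales
  show ?thesis
  proof (intro conjI ballI)
    show "reps pi \<subseteq> Kgrp v eps" by (rule reps_K)
  next
    fix g assume g: "g \<in> Kgrp v eps"
    show "\<exists>!r. r \<in> reps pi \<and> g \<in> dcoset v eps r"
      using exist_rep[OF g] reps_unique by blast
  qed
qed

end
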